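(* Let $X$ be a countable set and let $w$ be an essentially locally finite weight on $X$ which is geodesically complete. Then for every $x,y\in X$ there is a $w$-geodesic from $x$ to $y$.
   Context: A weight on $X$ is a symmetric function $w:X\times X\to[0,\infty]$ with $w(x,y)=0$ iff $x=y$; it is essentially locally finite if $\#\{y\in X\mid w(x,y)<R\}<\infty$ for all $x\in X$, $R>0$. A path from $x$ to $y$ is a finite sequence $(x_0,\dots,x_n)$ of pairwise distinct elements of $X$ with $x_0=x$, $x_n=y$; an infinite path is a sequence $(x_0,x_1,\dots)$ of pairwise distinct elements. The $w$-length is $l_w=\sum_i w(x_{i-1},x_i)$ (finite or infinite sum), and $\delta_w(x,y)$ is the infimum of $l_w$ over all paths from $x$ to $y$. A $w$-geodesic from $x$ to $y$ is a path with $l_w(\gamma)=\delta_w(x,y)$; an infinite path $(x_0,x_1,\dots)$ is an infinite $w$-geodesic if $(x_0,\dots,x_n)$ is a $w$-geodesic for every $n$. $w$ is geodesically complete if every infinite $w$-geodesic has infinite $w$-length. *)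

theory Defs
  imports "HOL-Analysis.Analysis" "HOL-Library.Extended_Nonnegative_Real"
begin

definition is_weight :: "'a set \<Rightarrow> ('a \<Rightarrow> 'a \<Rightarrow> ennreal) \<Rightarrow> bool" where
  "is_weight X w \<longleftrightarrow>
     (\<forall>x\<in>X. \<forall>y\<in>X. w x y = w y x) \<and> (\<forall>x\<in>X. \<forall>y\<in>X. w x y = 0 \<longleftrightarrow> x = y)"

definition ess_locally_finite :: "'a set \<Rightarrow> ('a \<Rightarrow> 'a \<Rightarrow> ennreal) \<Rightarrow> bool" where
  "ess_locally_finite X w \<longleftrightarrow>
     (\<forall>x\<in>X. \<forall>R::real. R > 0 \<longrightarrow> finite {y\<in>X. w x y < ennreal R})"

definition is_path :: "'a set \<Rightarrow> 'a \<Rightarrow> 'a \<Rightarrow> 'a list \<Rightarrow> bool" where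
  "is_path X x y xs \<longleftrightarrow> xs \<noteq> [] \<and> distinct xs \<and> set xs \<subseteq> X \<and> hd xs = x \<and> last xs = y"

definition path_length :: "('a \<Rightarrow> 'a \<Rightarrow> ennreal) \<Rightarrow> 'a list \<Rightarrow> ennreal" where
  "path_length w xs = sum_list (map (\<lambda>(a, b). w a b) (zip xs (tl xs)))"

definition delta :: "'a set \<Rightarrow> ('a \<Rightarrow> 'a \<Rightarrow> ennreal) \<Rightarrow> 'a \<Rightarrow> 'a \<Rightarrow> ennreal" where
  "delta X w x y = (INF xs\<in>{xs. is_path X x y xs}. path_length w xs)"

definition is_geodesic :: "'a set \<Rightarrow> ('a \<Rightarrow> 'a \<Rightarrow> ennreal) \<Rightarrow> 'a \<Rightarrow> 'a \<Rightarrow> 'a list \<Rightarrow> bool" where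
  "is_geodesic X w x y xs \<longleftrightarrow> is_path X x y xs \<and> path_length w xs = delta X w x y"

definition is_infinite_path :: "'a set \<Rightarrow> (nat \<Rightarrow> 'a) \<Rightarrow> bool" where
  "is_infinite_path X f \<longleftrightarrow> inj f \<and> range f \<subseteq> X"

definition infinite_path_length :: "('a \<Rightarrow> 'a \<Rightarrow> ennreal) \<Rightarrow> (nat \<Rightarrow> 'a) \<Rightarrow> ennreal" where
  "infinite_path_length w f = (\<Sum>i. w (f i) (f (Suc i)))"

definition is_infinite_geodesic :: "'a set \<Rightarrow> ('a \<Rightarrow> 'a \<Rightarrow> ennreal) \<Rightarrow> (nat \<Rightarrow> 'a) \<Rightarrow> bool" where
  "is_infinite_geodesic X w f \<longleftrightarrow> is_infinite_path X f \<and>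
     (\<forall>n. is_geodesic X w (f 0) (f n) (map f [0..<Suc n]))"

definition geodesically_complete :: "'a set \<Rightarrow> ('a \<Rightarrow> 'a \<Rightarrow> ennreal) \<Rightarrow> bool" where
  "geodesically_complete X w \<longleftrightarrow>
     (\<forall>f. is_infinite_geodesic X w f \<longrightarrow> infinite_path_length w f = \<infinity>)"

end

theory Submission
  imports Defs
begin

lemma pl_Nil[simp]: "path_length w [] = 0"
  by (simp add: path_length_def)

lemma pl_single[simp]: "path_length w [a] = 0"
  by (simp add: path_length_def)

lemma pl_Cons2[simp]: "path_length w (a#b#xs) = w a b + path_length w (b#xs)"
  by (simp add: path_length_def)

lemma pl_split: "path_length w (a @ v # b) = path_length w (a @ [v]) + path_length w (v # b)"
proof (induction a)
  case Nil
  then show ?case by simp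
next
  case (Cons c a)
  then show ?case by (cases a) (simp_all add: add.assoc)
qed

lemma pl_snoc: "xs \<noteq> [] \<Longrightarrow> path_length w (xs @ [z]) = path_length w xs + w (last xs) z"
proof (induction xs)
  case Nil
  then show ?case by simp
next
  case (Cons c a)
  then show ?case by (cases a) (simp_all add: add.assoc)
qed

lemma pl_prefix: "p \<noteq> [] \<Longrightarrow> path_length w p \<le> path_length w (p @ r)"
proof (cases r)
  case Nil
  then show ?thesis by simp
next
  case (Cons z r')
  assume "p \<noteq> []"
  have "path_length w (p @ r) = path_length w p + w (last p) z + path_length w (z # r')"
    using Cons pl_split[of w p z r'] pl_snoc[OF \<open>p \<noteq> []\<close>, of w z] by simp
  then show ?thesis by (simp add: add.assoc)
qed

lemma pl_map_upt: "path_length w (map f [0..<Suc n]) = (\<Sum>i<n. w (f i) (f (Suc i)))"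
proof (induction n)
  case 0
  then show ?case by simp
next
  case (Suc n)
  have "map f [0..<Suc (Suc n)] = map f [0..<Suc n] @ [f (Suc n)]" by simp
  moreover have "last (map f [0..<Suc n]) = f n" by simp
  ultimately show ?case using Suc pl_snoc[of "map f [0..<Suc n]" w "f (Suc n)"]
    by simp
qed

lemma shortcut:
  "xs \<noteq> [] \<Longrightarrow> \<exists>ys. ys \<noteq> [] \<and> distinct ys \<and> set ys \<subseteq> set xs \<and> hd ys = hd xs
     \<and> last ys = last xs \<and> path_length w ys \<le> path_length w xs"
proof (induction "length xs" arbitrary: xs rule: less_induct)
  case less
  show ?case
  proof (cases "distinct xs")
    case True
    then show ?thesis using less.prems by blast
  next
    case False
    then obtain as bs cs y where xs: "xs = as @ [y] @ bs @ [y] @ cs"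
      using not_distinct_decomp by blast
    define xs' where "xs' = as @ [y] @ cs"
    have len: "length xs' < length xs" using xs xs'_def by simp
    have ne: "xs' \<noteq> []" using xs'_def by simp
    have hd: "hd xs' = hd xs" using xs xs'_def by (cases as) simp_all
    have lst: "last xs' = last xs" using xs xs'_def by (cases cs) simp_all
    have st: "set xs' \<subseteq> set xs" using xs xs'_def by auto
    have e1: "path_length w xs = path_length w (as @ [y]) + path_length w ((y # bs) @ y # cs)"
      using xs pl_split[of w as y "bs @ [y] @ cs"] by simp
    have e2: "path_length w ((y # bs) @ y # cs) = path_length w ((y # bs) @ [y]) + path_length w (y # cs)"
      by (rule pl_split)
    have e3: "path_length w xs' = path_length w (as @ [y]) + path_length w (y # cs)"
      using xs'_def pl_split[of w as y cs] by simp
    have le: "path_length w xs' \<le> path_length w xs"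
      using e1 e2 e3 by (simp add: add_left_mono)
    from less.hyps[OF len ne] obtain ys where ys: "ys \<noteq> []" "distinct ys" "set ys \<subseteq> set xs'" "hd ys = hd xs'"
     "last ys = last xs'" "path_length w ys \<le> path_length w xs'" by blast
    have "set ys \<subseteq> set xs" using ys(3) st by (rule subset_trans)
    moreover have "path_length w ys \<le> path_length w xs" using ys(6) le by (rule order_trans)
    ultimately show ?thesis using ys hd lst by metis
  qed
qed

lemma delta_le: "is_path X x y p \<Longrightarrow> delta X w x y \<le> path_length w p"
  unfolding delta_def by (rule INF_lower) simp

theorem lemma2p5:
  fixes X :: "'a set" and w :: "'a \<Rightarrow> 'a \<Rightarrow> ennreal"
  assumes "countable X"
    and "is_weight X w"
    and "ess_locally_finite X w"
    and "geodesically_complete X w"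
    and "x \<in> X" and "y \<in> X"
  shows "\<exists>xs. is_geodesic X w x y xs"
proof -
  define D where "D = delta X w x y"
  have ex_path: "\<exists>p. is_path X x y p"
  proof (cases "x = y")
    case True
    then show ?thesis using assms(5) by (intro exI[of _ "[x]"]) (simp add: is_path_def)
  next
    case False
    then show ?thesis using assms(5,6) by (intro exI[of _ "[x,y]"]) (simp add: is_path_def)
  qed
  show ?thesis
  proof (cases "D = \<infinity>")
    case True
    obtain p where p: "is_path X x y p" using ex_path by blast
    have "path_length w p = D" using delta_le[OF p, of w] True D_def by (simp add: top_unique)
    then show ?thesis using p D_def by (auto simp: is_geodesic_def)
  next
    case Dfin: False
    define good where "good p \<longleftrightarrow> p \<noteq> [] \<and> (\<forall>e>0. \<exists>r. is_path X x y (p@r) \<and> path_length w (p@r) < D + ennreal e)" for p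
    have goodD: "p \<noteq> []" "\<And>e. e > 0 \<Longrightarrow> \<exists>r. is_path X x y (p@r) \<and> path_length w (p@r) < D + ennreal e"
      if "good p" for p using that unfolding good_def by auto
    have good_path: "\<exists>r. is_path X x y (p@r)" if "good p" for p
      using goodD(2)[OF that, of 1] by auto
    have good_le: "path_length w p \<le> D" if gp: "good p" for p
    proof (rule ennreal_le_epsilon)
      fix e :: real assume "0 < e"
      then obtain r where "path_length w (p@r) < D + ennreal e" using goodD(2)[OF gp] by blast
      moreover have "path_length w p \<le> path_length w (p@r)" using pl_prefix[OF goodD(1)[OF gp]] .
      ultimately show "path_length w p \<le> D + ennreal e" by simp
    qed
    have good_x: "good [x]"
      unfolding good_def
    proof (intro conjI allI impI)
      fix e :: real assume "0 < e"
      have "D < D + ennreal e" using Dfin \<open>0 < e\<close>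
        by (metis add.right_neutral ennreal_add_left_cancel_less ennreal_less_zero_iff)
      then obtain q where q: "is_path X x y q" "path_length w q < D + ennreal e"
        unfolding D_def delta_def by (subst (asm) INF_less_iff) auto
      then have "q = [x] @ tl q" unfolding is_path_def by (cases q) auto
      then show "\<exists>r. is_path X x y ([x] @ r) \<and> path_length w ([x] @ r) < D + ennreal e"
        using q by metis
    qed simp
    have good_end: "is_geodesic X w x y p" if g: "good p" and l: "last p = y" for p
    proof -
      obtain r where r: "is_path X x y (p@r)" using good_path[OF g] by blast
      have "r = []"
      proof (rule ccontr)
        assume "r \<noteq> []"
        then have "last r = y" using r unfolding is_path_def by simp
        then have "y \<in> set r" using \<open>r \<noteq> []\<close> by (metis last_in_set)
        moreover have "y \<in> set p" using l goodD(1)[OF g] by (metis last_in_set)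
        ultimately have "y \<in> set r" "y \<in> set p" by auto
        then show False using r unfolding is_path_def by auto
      qed
      then have p: "is_path X x y p" using r by simp
      show ?thesis using good_le[OF g] delta_le[OF p, of w] p D_def is_geodesic_def
        by (metis antisym)
    qed
    have good_step: "\<exists>z. good (p@[z])" if g: "good p" and l: "last p \<noteq> y" for p
    proof (rule ccontr)
      assume ng: "\<not> (\<exists>z. good (p@[z]))"
      obtain r0 where r0: "is_path X x y (p@r0)" using good_path[OF g] by blast
      have pne: "p \<noteq> []" using goodD(1)[OF g] .
      have lX: "last p \<in> X" using r0 pne unfolding is_path_def by auto
      define F where "F = {z\<in>X. w (last p) z < D + ennreal 1}"
      have "D + ennreal 1 = ennreal (enn2real D + 1)" using Dfin
        by (simp add: ennreal_enn2real_if)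
      have R: "enn2real D + 1 > 0" using enn2real_nonneg[of D] by linarith
      have "finite {z\<in>X. w (last p) z < ennreal (enn2real D + 1)}"
        using assms(3) lX R unfolding ess_locally_finite_def by blast
      then have finF: "finite F" unfolding F_def using \<open>D + ennreal 1 = ennreal (enn2real D + 1)\<close> by simp
      have "\<exists>e>0. \<forall>r. is_path X x y (p@[z]@r) \<longrightarrow> \<not> path_length w (p@[z]@r) < D + ennreal e" for z
      proof -
        have "\<not> good (p@[z])" using ng by blast
        then show ?thesis unfolding good_def by simp
      qed
      then have "\<forall>z\<in>F. \<exists>e>0. \<forall>r. is_path X x y (p@[z]@r) \<longrightarrow> \<not> path_length w (p@[z]@r) < D + ennreal e"
        by blast
      then obtain e where e: "\<forall>z\<in>F. e z > 0 \<and> (\<forall>r. is_path X x y (p@[z]@r) \<longrightarrow> \<not> path_length w (p@[z]@r) < D + ennreal (e z))"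
        by metis
      define \<epsilon> where "\<epsilon> = Min (insert 1 (e ` F))"
      have fin: "finite (insert 1 (e ` F))" using finF by simp
      have epos: "\<epsilon> > 0" unfolding \<epsilon>_def using fin e by (subst Min_gr_iff) auto
      have e1: "\<epsilon> \<le> 1" unfolding \<epsilon>_def using fin by simp
      have ez: "\<epsilon> \<le> e z" if "z \<in> F" for z unfolding \<epsilon>_def using fin that by simp
      obtain r where r: "is_path X x y (p@r)" "path_length w (p@r) < D + ennreal \<epsilon>"
        using goodD(2)[OF g epos] by blast
      have "r \<noteq> []" using r l unfolding is_path_def by auto
      then obtain z r' where rz: "r = z # r'" by (cases r) auto
      have "path_length w (p @ r) = path_length w p + w (last p) z + path_length w (z # r')"
        using rz pl_split[of w p z r'] pl_snoc[OF pne, of w z] by simp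
      then have "w (last p) z \<le> path_length w (p @ r)"
        by (simp add: add_increasing2 add_increasing)
      also have "\<dots> < D + ennreal \<epsilon>" by (rule r(2))
      also have "\<dots> \<le> D + ennreal 1" using e1 by (simp add: add_left_mono)
      finally have "z \<in> F" unfolding F_def using r(1) rz unfolding is_path_def by auto
      moreover have "D + ennreal \<epsilon> \<le> D + ennreal (e z)" using ez[OF \<open>z \<in> F\<close>] by (intro add_left_mono ennreal_leI)
      ultimately show False using e r rz by (metis append_Cons append_Nil order_less_le_trans)
    qed
    show ?thesis
    proof (cases "\<exists>p. good p \<and> last p = y")
      case True
      then show ?thesis using good_end by blast
    next
      case noend: False
      define nxt where "nxt p = (SOME z. good (p@[z]))" for p
      have step: "good (p @ [nxt p])" if "good p" for p
        using good_step[OF that] noend that unfolding nxt_def by (metis someI_ex)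
      define P where "P = rec_nat [x] (\<lambda>_ p. p @ [nxt p])"
      have P0: "P 0 = [x]" and PS: "P (Suc n) = P n @ [nxt (P n)]" for n by (simp_all add: P_def)
      have gP: "good (P n)" for n by (induction n) (simp_all add: P0 PS good_x step)
      define f where "f n = last (P n)" for n
      have Pf: "P n = map f [0..<Suc n]" for n
      proof (induction n)
        case 0
        then show ?case by (simp add: P0 f_def)
      next
        case (Suc n)
        have "f (Suc n) = nxt (P n)" by (simp add: f_def PS)
        then show ?case using Suc by (simp add: PS)
      qed
      have pathP: "is_path X x (f n) (P n)" for n
      proof -
        obtain r where r: "is_path X x y (P n @ r)" using good_path[OF gP[of n]] by blast
        have "P n \<noteq> []" using goodD(1)[OF gP] .
        then show ?thesis using r unfolding is_path_def f_def by auto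
      qed
      have geoP: "path_length w (P n) = delta X w x (f n)" for n
      proof (rule antisym[OF _ delta_le[OF pathP]])
        show "path_length w (P n) \<le> delta X w x (f n)"
        proof (rule ccontr)
          assume "\<not> ?thesis"
          then have "delta X w x (f n) < path_length w (P n)" by simp
          then obtain q where q: "is_path X x (f n) q" "path_length w q < path_length w (P n)"
            unfolding delta_def by (subst (asm) INF_less_iff) auto
          have bD: "path_length w (P n) \<le> D" using good_le[OF gP] .
          then have bfin: "path_length w (P n) \<noteq> \<infinity>" using Dfin by (metis infinity_ennreal_def top.extremum_uniqueI)
          then have afin: "path_length w q \<noteq> \<infinity>" using q(2) by auto
          define a where "a = enn2real (path_length w q)"
          define b where "b = enn2real (path_length w (P n))"
          have ea: "path_length w q = ennreal a" using afin a_def by (simp add: ennreal_enn2real_if)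
          have eb: "path_length w (P n) = ennreal b" using bfin b_def by (simp add: ennreal_enn2real_if)
          have a0: "0 \<le> a" unfolding a_def by (rule enn2real_nonneg)
          have "ennreal a < ennreal b" using q(2) unfolding ea eb .
          then have ab: "a < b" "0 \<le> a" using a0 by (auto simp: ennreal_less_iff)
          obtain r where r: "is_path X x y (P n @ r)" "path_length w (P n @ r) < D + ennreal (b - a)"
            using goodD(2)[OF gP[of n], of "b - a"] ab by auto
          have "r \<noteq> []" using r noend gP[of n] unfolding is_path_def by auto
          then obtain z r' where rz: "r = z # r'" by (cases r) auto
          have pne: "P n \<noteq> []" using goodD(1)[OF gP] .
          have qne: "q \<noteq> []" using q unfolding is_path_def by simp
          have lq: "last q = f n" using q unfolding is_path_def by simp
          define c where "c = w (f n) z + path_length w (z # r')"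
          have "path_length w (P n @ r) = path_length w (P n) + c"
            using rz pl_split[of w "P n" z r'] pl_snoc[OF pne, of w z] c_def f_def
            by (simp add: add.assoc)
          have wl: "path_length w (q @ z # r') = path_length w q + c"
            using pl_split[of w q z r'] pl_snoc[OF qne, of w z] c_def lq
            by (simp add: add.assoc)
          have "ennreal b + c < D + ennreal (b - a)"
            using r(2) \<open>path_length w (P n @ r) = path_length w (P n) + c\<close> eb by simp
          moreover have "ennreal b = ennreal (b - a) + ennreal a" using ab
            by (simp flip: ennreal_plus)
          ultimately have "ennreal (b - a) + (ennreal a + c) < ennreal (b - a) + D"
            by (simp add: add.commute add.left_commute)
          then have lt: "path_length w (q @ z # r') < D"
            using wl ea ennreal_add_left_cancel_less by simp
          obtain s where s: "s \<noteq> []" "distinct s" "set s \<subseteq> set (q @ z # r')" "hd s = hd (q @ z # r')"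
            "last s = last (q @ z # r')" "path_length w s \<le> path_length w (q @ z # r')"
            using shortcut[of "q @ z # r'" w] by auto
          have "is_path X x y s"
            using s q(1) r(1) rz qne unfolding is_path_def by auto
          then have "D \<le> path_length w s" unfolding D_def by (rule delta_le)
          then show False using s(6) lt by simp
        qed
      qed
      have injf: "inj f"
      proof (rule injI)
        fix m n assume fmn: "f m = f n"
        define N where "N = max m n"
        have "distinct (P N)" using pathP[of N] unfolding is_path_def by simp
        then have "distinct (map f [0..<Suc N])" unfolding Pf[of N] .
        then have inj: "inj_on f (set [0..<Suc N])" unfolding distinct_map by blast
        have "m \<in> set [0..<Suc N]" "n \<in> set [0..<Suc N]" unfolding N_def by auto
        then show "m = n" using inj fmn by (meson inj_onD)
      qed
      have rangef: "range f \<subseteq> X"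
      proof
        fix z assume "z \<in> range f"
        then obtain n where "z = f n" by auto
        then show "z \<in> X" using pathP[of n] unfolding is_path_def by (metis last_in_set subsetD)
      qed
      have f0: "f 0 = x" by (simp add: f_def P0)
      have "is_infinite_geodesic X w f"
        unfolding is_infinite_geodesic_def is_infinite_path_def is_geodesic_def
      proof (intro conjI allI injf rangef)
        fix n
        show "is_path X (f 0) (f n) (map f [0..<Suc n])"
          using pathP[of n] unfolding Pf[symmetric] f0 .
        show "path_length w (map f [0..<Suc n]) = delta X w (f 0) (f n)"
          using geoP[of n] unfolding Pf[symmetric] f0 .
      qed
      then have inf: "infinite_path_length w f = \<infinity>"
        using assms(4) unfolding geodesically_complete_def by blast
      have "infinite_path_length w f \<le> D"
        unfolding infinite_path_length_def
      proof (rule suminf_le_const)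
        show "summable (\<lambda>i. w (f i) (f (Suc i)))" by (rule summableI)
        fix n show "(\<Sum>i<n. w (f i) (f (Suc i))) \<le> D"
          using good_le[OF gP[of n]] Pf[of n] pl_map_upt[of w f n] by simp
      qed
      then show ?thesis using inf Dfin by (simp add: top_unique)
    qed
  qed
qed

end
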